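(* For every odd integer $T=2k+1\ge 5$ and every $\sigma\in\mathfrak S_3$, the vector $\sigma c$ with $c=[1,1,-1,-1,1,1]$ defines a facet of $P^T$.
   Context: For an integer $T\ge 2$, let $\Omega_T$ be the set of words $w=s_1s_2\cdots s_T$ over $\{1,2,3\}$ with $s_l\neq s_{l+1}$ for $l=1,\dots,T-1$. For $w\in\Omega_T$ and an ordered pair $ij$, $i\neq j$, let $x_{ij}(w)$ be the number of indices $1\le l\le T-1$ with $s_ls_{l+1}=ij$. Vectors of $\mathbb R^6$ are indexed in the order $[x_{12},x_{13},x_{21},x_{23},x_{31},x_{32}]$. Let $a_w=[x_{12}(w),\dots,x_{32}(w)]$ and $P^T=\mathrm{conv}\{a_w:w\in\Omega_T\}$. $\mathfrak S_3$ acts on $\mathbb R^6$ by $(\sigma c)_{ij}=c_{\sigma(i)\sigma(j)}$. A vector $c$ defines a facet of $P^T$ if $c\cdot a_w\ge0$ for all $w\in\Omega_T$ and $\{x\in P^T: c\cdot x=0\}$ is a facet of $P^T$. *)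

theory Defs
  imports "HOL-Analysis.Analysis"
begin

definition Omega :: "nat \<Rightarrow> nat list set" where
  "Omega T = {w. length w = T \<and> set w \<subseteq> {1,2,3} \<and>
                 (\<forall>l. l + 1 < T \<longrightarrow> w ! l \<noteq> w ! (l + 1))}"

definition xcount :: "nat \<Rightarrow> nat \<Rightarrow> nat list \<Rightarrow> nat" where
  "xcount i j w = card {l. l + 1 < length w \<and> w ! l = i \<and> w ! (l + 1) = j}"

text \<open>Coordinates ordered as [x12, x13, x21, x23, x31, x32].\<close>
definition avec :: "nat list \<Rightarrow> real^6" where
  "avec w = vector [real (xcount 1 2 w), real (xcount 1 3 w), real (xcount 2 1 w),
                    real (xcount 2 3 w), real (xcount 3 1 w), real (xcount 3 2 w)]"

definition P :: "nat \<Rightarrow> (real^6) set" where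
  "P T = convex hull (avec ` Omega T)"

definition ent :: "real^6 \<Rightarrow> nat \<Rightarrow> nat \<Rightarrow> real" where
  "ent c i j =
     (if (i,j) = (1,2) then c$1 else if (i,j) = (1,3) then c$2 else
      if (i,j) = (2,1) then c$3 else if (i,j) = (2,3) then c$4 else
      if (i,j) = (3,1) then c$5 else if (i,j) = (3,2) then c$6 else 0)"

definition sact :: "(nat \<Rightarrow> nat) \<Rightarrow> real^6 \<Rightarrow> real^6" where
  "sact \<sigma> c = vector [ent c (\<sigma> 1) (\<sigma> 2), ent c (\<sigma> 1) (\<sigma> 3), ent c (\<sigma> 2) (\<sigma> 1),
                      ent c (\<sigma> 2) (\<sigma> 3), ent c (\<sigma> 3) (\<sigma> 1), ent c (\<sigma> 3) (\<sigma> 2)]"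

definition defines_facet :: "nat \<Rightarrow> real^6 \<Rightarrow> bool" where
  "defines_facet T c \<longleftrightarrow>
     (\<forall>w \<in> Omega T. c \<bullet> avec w \<ge> 0) \<and>
     {x \<in> P T. c \<bullet> x = 0} facet_of P T"

end

theory Submission imports Defs begin
lemma xcount_sum: "xcount i j w = (\<Sum>l<length w - 1. if w!l = i \<and> w!(l+1) = j then 1 else 0)"
proof -
  have "{l. l + 1 < length w \<and> w ! l = i \<and> w ! (l + 1) = j} = {l \<in> {..<length w - 1}. w ! l = i \<and> w ! (l + 1) = j}"
    by auto
  then show ?thesis unfolding xcount_def by (simp add: sum.inter_filter[symmetric])
qed
lemma xcount_Cons2: "xcount i j (x#y#w) = (if x = i \<and> y = j then 1 else 0) + xcount i j (y#w)"
  unfolding xcount_sum by (simp only: length_Cons diff_Suc_1 sum.lessThan_Suc_shift) simp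
lemma xcount_single[simp]: "xcount i j [z] = 0"
  unfolding xcount_sum by simp

fun alt :: "nat \<Rightarrow> nat \<Rightarrow> nat \<Rightarrow> nat \<Rightarrow> nat list" where
  "alt x y 0 z = [z]"
| "alt x y (Suc n) z = x # y # alt x y n z"

lemma length_alt[simp]: "length (alt x y n z) = 2*n+1"
  by (induct n) auto

lemma nth_alt: "l < 2*n+1 \<Longrightarrow> alt x y n z ! l = (if l < 2*n then (if even l then x else y) else z)"
proof (induct n arbitrary: l)
  case 0 then show ?case by simp
next
  case (Suc n)
  show ?case
  proof (cases l)
    case 0 then show ?thesis by simp
  next
    case (Suc l')
    then show ?thesis
    proof (cases l')
      case 0 then show ?thesis using Suc by simp
    next
      case (Suc l'')
      then show ?thesis using \<open>l = Suc l'\<close> Suc.prems Suc.hyps[of l''] by auto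
    qed
  qed
qed

lemma alt_Omega: "x \<in> {1,2,3} \<Longrightarrow> y \<in> {1,2,3} \<Longrightarrow> z \<in> {1,2,3} \<Longrightarrow> x \<noteq> y \<Longrightarrow> y \<noteq> z
  \<Longrightarrow> alt x y n z \<in> Omega (2*n+1)"
  unfolding Omega_def
proof (intro CollectI conjI allI impI)
  assume a: "x \<in> {1,2,3}" "y \<in> {1,2,3}" "z \<in> {1,2,3}" "x \<noteq> y" "y \<noteq> z"
  show "set (alt x y n z) \<subseteq> {1,2,3}"
    using a by (induct n) auto
  fix l assume l: "l + 1 < 2*n+1"
  show "alt x y n z ! l \<noteq> alt x y n z ! (l + 1)"
    using l a by (auto simp: nth_alt)
qed simp

lemma xcount_alt: "n \<ge> 1 \<Longrightarrow> xcount i j (alt x y n z) =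
   n * (if x = i \<and> y = j then 1 else 0) + (n-1) * (if y = i \<and> x = j then 1 else 0)
   + (if y = i \<and> z = j then 1 else 0)"
proof (induct n rule: dec_induct)
  case base then show ?case by (simp add: xcount_Cons2)
next
  case (step n)
  then obtain n' where "n = Suc n'" by (cases n) auto
  then show ?case using step by (simp add: xcount_Cons2)
qed

lemma exhaust_6':
  fixes x :: 6
  shows "x = 1 \<or> x = 2 \<or> x = 3 \<or> x = 4 \<or> x = 5 \<or> x = 6"
proof (induct x)
  case (of_int z)
  then have "z = 0 \<or> z = 1 \<or> z = 2 \<or> z = 3 \<or> z = 4 \<or> z = 5" by fastforce
  then show ?case by auto
qed
lemma UNIV6: "(UNIV::6 set) = {1,2,3,4,5,6}"
  using exhaust_6' by auto
lemma inner6: "(x::real^6) \<bullet> y = x$1*y$1 + x$2*y$2 + x$3*y$3 + x$4*y$4 + x$5*y$5 + x$6*y$6"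
  unfolding inner_vec_def UNIV6 by simp
lemma vector_6 [simp]:
 "(vector [a,b,c,d,e,f] ::('a::zero)^6)$1 = a"
 "(vector [a,b,c,d,e,f] ::('a::zero)^6)$2 = b"
 "(vector [a,b,c,d,e,f] ::('a::zero)^6)$3 = c"
 "(vector [a,b,c,d,e,f] ::('a::zero)^6)$4 = d"
 "(vector [a,b,c,d,e,f] ::('a::zero)^6)$5 = e"
 "(vector [a,b,c,d,e,f] ::('a::zero)^6)$6 = f"
  unfolding vector_def by simp_all

lemma val:
  assumes w: "w \<in> Omega T"
  shows "(vector [g 1, g 1, g 2, g 2, g 3, g 3] :: real^6) \<bullet> avec w = (\<Sum>l<T-1. g (w!l))"
proof -
  let ?I = "\<lambda>i j l. (if w!l = i \<and> w!(l+1) = j then 1 else 0::real)"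
  have lw: "length w = T" and sw: "set w \<subseteq> {1,2,3}" and adj: "\<And>l. l+1 < T \<Longrightarrow> w!l \<noteq> w!(l+1)"
    using w unfolding Omega_def by auto
  have xr: "real (xcount i j w) = (\<Sum>l<T-1. ?I i j l)" for i j
    unfolding xcount_sum lw of_nat_sum by (intro sum.cong) auto
  have "(\<Sum>l<T-1. g (w!l)) = (\<Sum>l<T-1. g 1 * ?I 1 2 l + g 1 * ?I 1 3 l + g 2 * ?I 2 1 l
         + g 2 * ?I 2 3 l + g 3 * ?I 3 1 l + g 3 * ?I 3 2 l)"
  proof (rule sum.cong)
    fix l assume "l \<in> {..<T-1}"
    then have l: "l + 1 < T" by auto
    then have "w!l \<in> {1,2,3}" "w!(l+1) \<in> {1,2,3}" "w!l \<noteq> w!(l+1)"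
    proof -
      have "w!l \<in> set w" "w!(l+1) \<in> set w" using l lw by auto
      then show "w!l \<in> {1,2,3}" "w!(l+1) \<in> {1,2,3}" "w!l \<noteq> w!(l+1)" using sw adj[OF l] by auto
    qed
    then show "g (w!l) = g 1 * ?I 1 2 l + g 1 * ?I 1 3 l + g 2 * ?I 2 1 l
         + g 2 * ?I 2 3 l + g 3 * ?I 3 1 l + g 3 * ?I 3 2 l"
      by auto
  qed simp
  also have "\<dots> = vector [g 1, g 1, g 2, g 2, g 3, g 3] \<bullet> avec w"
    unfolding inner6 avec_def vector_6 xr by (simp add: sum.distrib sum_distrib_left)
  finally show ?thesis by simp
qed

lemma pairsum:
  fixes k :: nat
  assumes "\<And>t. t < k \<Longrightarrow> h (2*t) + h (2*t+1) \<ge> (0::real)"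
  shows "(\<Sum>l<2*k. h l) \<ge> 0"
  using assms
proof (induct k)
  case 0 then show ?case by simp
next
  case (Suc k)
  have e: "2 * Suc k = Suc (Suc (2*k))" by simp
  have "(\<Sum>l<2*k. h l) \<ge> 0" using Suc by auto
  moreover have "h (2*k) + h (2*k+1) \<ge> 0" using Suc.prems by auto
  ultimately show ?case unfolding e by simp
qed

lemma val_alt:
  assumes "x \<in> {1,2,3}" "y \<in> {1,2,3}" "z \<in> {1,2,3}" "x \<noteq> y" "y \<noteq> z" "n \<ge> 1"
  shows "(vector [g 1, g 1, g 2, g 2, g 3, g 3] :: real^6) \<bullet> avec (alt x y n z) = real n * g x + real n * g y"
proof -
  have "real (n - 1) = real n - 1" using assms by simp
  then show ?thesis
    using assms unfolding inner6 avec_def vector_6 xcount_alt[OF \<open>n\<ge>1\<close>]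
    by (auto simp: algebra_simps)
qed

lemma ent_add: "ent (x + y) i j = ent x i j + ent y i j"
  unfolding ent_def by simp
lemma ent_scale: "ent (r *\<^sub>R x) i j = r * ent x i j"
  unfolding ent_def by simp
lemma ent_zero: "ent 0 i j = 0"
  unfolding ent_def by simp
lemma ent_avec: "i \<in> {1,2,3} \<Longrightarrow> j \<in> {1,2,3} \<Longrightarrow> i \<noteq> j \<Longrightarrow> ent (avec w) i j = real (xcount i j w)"
  unfolding ent_def avec_def by auto

lemma main:
  fixes m a b k :: nat and g :: "nat \<Rightarrow> real"
  assumes mab: "m \<in> {1,2,3}" "a \<in> {1,2,3}" "b \<in> {1,2,3}" "m \<noteq> a" "m \<noteq> b" "a \<noteq> b"
    and k: "k \<ge> 1"
    and g: "g = (\<lambda>i. if i = m then -1 else 1)"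
  shows "defines_facet (2*k+1) (vector [g 1, g 1, g 2, g 2, g 3, g 3])"
proof -
  define d :: "real^6" where "d = vector [g 1, g 1, g 2, g 2, g 3, g 3]"
  define T where "T = 2*k+1"
  have nonneg: "d \<bullet> avec w \<ge> 0" if w: "w \<in> Omega T" for w
  proof -
    have lw: "length w = T" and adj: "\<And>l. l+1 < T \<Longrightarrow> w!l \<noteq> w!(l+1)"
      using w unfolding Omega_def by auto
    have "d \<bullet> avec w = (\<Sum>l<2*k. g (w!l))"
      unfolding d_def val[OF w] T_def by simp
    also have "\<dots> \<ge> 0"
    proof (rule pairsum)
      fix t assume "t < k"
      then have "w!(2*t) \<noteq> w!(2*t+1)" using adj[of "2*t"] unfolding T_def by auto
      then show "g (w!(2*t)) + g (w!(2*t+1)) \<ge> 0" unfolding g by auto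
    qed
    finally show ?thesis .
  qed
  have Pnn: "P T \<subseteq> {x. d \<bullet> x \<ge> 0}"
    unfolding P_def by (rule hull_minimal) (use nonneg convex_halfspace_ge in auto)
  define F where "F = {x \<in> P T. d \<bullet> x = 0}"
  have cvx: "convex (P T)" unfolding P_def by simp
  have face: "F face_of P T"
  proof -
    have "(P T \<inter> {x. d \<bullet> x = 0}) face_of P T"
      by (rule face_of_Int_supporting_hyperplane_ge) (use cvx Pnn in auto)
    moreover have "P T \<inter> {x. d \<bullet> x = 0} = F" unfolding F_def by auto
    ultimately show ?thesis by simp
  qed
  have inP: "avec w \<in> P T" if "w \<in> Omega T" for w
    unfolding P_def using that by (simp add: hull_inc)
  have gm: "g m = -1" "g a = 1" "g b = 1" using g mab by auto
  have zero: "d \<bullet> avec (alt x y k z) = 0" if "x \<in> {1,2,3}" "y \<in> {1,2,3}" "z \<in> {1,2,3}" "x \<noteq> y" "y \<noteq> z"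
     "g x + g y = 0" for x y z
  proof -
    have "d \<bullet> avec (alt x y k z) = real k * (g x + g y)"
      unfolding d_def using val_alt[OF that(1-5) k, of g] by (simp add: algebra_simps)
    then show ?thesis using that by simp
  qed
  have inF: "avec (alt x y k z) \<in> F" if "x \<in> {1,2,3}" "y \<in> {1,2,3}" "z \<in> {1,2,3}" "x \<noteq> y" "y \<noteq> z"
     "g x + g y = 0" for x y z
  proof -
    have "alt x y k z \<in> Omega T" using alt_Omega[OF that(1-5), of k] unfolding T_def .
    then show ?thesis unfolding F_def using zero[OF that] inP by simp
  qed
  define p1 where "p1 = avec (alt m a k m)"
  define p2 where "p2 = avec (alt m a k b)"
  define p3 where "p3 = avec (alt m b k a)"
  define p4 where "p4 = avec (alt m b k m)"
  define p5 where "p5 = avec (alt a m k b)"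
  have sub: "{p1,p2,p3,p4,p5} \<subseteq> F"
    unfolding p1_def p2_def p3_def p4_def p5_def using mab gm
    by (intro insert_subsetI empty_subsetI inF) auto
  then have Fne: "F \<noteq> {}" by auto
  have FneP: "F \<noteq> P T"
  proof
    assume "F = P T"
    have "avec (alt a b k a) \<in> P T"
      using inP alt_Omega[of a b a k] mab unfolding T_def by auto
    moreover have "d \<bullet> avec (alt a b k a) = real k * 2"
      unfolding d_def using val_alt[of a b a k g] mab k gm by auto
    ultimately show False using \<open>F = P T\<close> k unfolding F_def by (metis (mono_tags, lifting) mem_Collect_eq mult_eq_0_iff of_nat_eq_0_iff not_one_le_zero zero_neq_numeral)
  qed
  have lt: "aff_dim F < aff_dim (P T)"
    by (rule face_of_aff_dim_lt[OF cvx face FneP])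
  define one :: "real^6" where "one = vector [1,1,1,1,1,1]"
  have one_val: "one \<bullet> avec w = real (2*k)" if "w \<in> Omega T" for w
    using val[OF that, of "\<lambda>_. 1"] unfolding one_def T_def by simp
  have "P T \<subseteq> {x. one \<bullet> x = real (2*k)}"
    unfolding P_def by (rule hull_minimal) (use one_val convex_hyperplane in auto)
  moreover have "one \<noteq> 0"
  proof
    assume "one = 0"
    then have "one $ 1 = 0" by simp
    then show False unfolding one_def by simp
  qed
  ultimately have upP: "aff_dim (P T) \<le> 5"
    using aff_dim_subset[of "P T" "{x. one \<bullet> x = real (2*k)}"] by simp
  have E: "ent p i j = real (xcount i j w)" if "p = avec w" "i \<in> {1,2,3}" "j \<in> {1,2,3}" "i \<noteq> j" for p w i j
    using ent_avec that by simp
  note xa = xcount_alt[OF k]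
  have e1: "ent p1 a b = 0" "ent p1 b a = 0" "ent p1 b m = 0" "ent p1 m b = 0"
    using mab by (auto simp: E[OF p1_def] xa)
  have e2: "ent p2 a b = 1" "ent p2 b a = 0" "ent p2 b m = 0" "ent p2 m b = 0"
    using mab by (auto simp: E[OF p2_def] xa)
  have e3: "ent p3 a b = 0" "ent p3 b a = 1" "ent p3 b m = real k - 1" "ent p3 m b = real k"
    using mab k by (auto simp: E[OF p3_def] xa of_nat_diff)
  have e4: "ent p4 a b = 0" "ent p4 b a = 0" "ent p4 b m = real k" "ent p4 m b = real k"
    using mab k by (auto simp: E[OF p4_def] xa of_nat_diff)
  have e5: "ent p5 a b = 0" "ent p5 b a = 0" "ent p5 b m = 0" "ent p5 m b = 1"
    using mab by (auto simp: E[OF p5_def] xa)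
  have ne: "p1 \<noteq> p2" "p1 \<noteq> p3" "p1 \<noteq> p4" "p1 \<noteq> p5" "p2 \<noteq> p3" "p2 \<noteq> p4" "p2 \<noteq> p5"
      "p3 \<noteq> p4" "p3 \<noteq> p5" "p4 \<noteq> p5"
    using e1 e2 e3 e4 e5 k by (auto dest: arg_cong[where f = "\<lambda>p. ent p a b"] arg_cong[where f = "\<lambda>p. ent p b a"]
       arg_cong[where f = "\<lambda>p. ent p b m"] arg_cong[where f = "\<lambda>p. ent p m b"])
  have card5: "card {p1,p2,p3,p4,p5} = 5" using ne by auto
  have indep: "\<not> affine_dependent {p1,p2,p3,p4,p5}"
  proof
    assume "affine_dependent {p1,p2,p3,p4,p5}"
    then obtain U where U: "sum U {p1,p2,p3,p4,p5} = 0" "\<exists>v\<in>{p1,p2,p3,p4,p5}. U v \<noteq> 0"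
      "(\<Sum>v\<in>{p1,p2,p3,p4,p5}. U v *\<^sub>R v) = 0"
      using affine_dependent_explicit_finite[of "{p1,p2,p3,p4,p5}"] by auto
    have s1: "U p1 + U p2 + U p3 + U p4 + U p5 = 0" using U(1) ne by simp
    have s2: "U p1 *\<^sub>R p1 + U p2 *\<^sub>R p2 + U p3 *\<^sub>R p3 + U p4 *\<^sub>R p4 + U p5 *\<^sub>R p5 = 0"
      using U(3) ne by (simp add: algebra_simps)
    have c: "U p1 * ent p1 i j + U p2 * ent p2 i j + U p3 * ent p3 i j + U p4 * ent p4 i j + U p5 * ent p5 i j = 0" for i j
      using arg_cong[OF s2, of "\<lambda>p. ent p i j"] by (simp add: ent_add ent_scale ent_zero)
    have "U p2 = 0" using c[of a b] e1 e2 e3 e4 e5 by simp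
    moreover have "U p3 = 0" using c[of b a] e1 e2 e3 e4 e5 by simp
    moreover have "U p4 = 0" using c[of b m] e1 e2 e3 e4 e5 k \<open>U p3 = 0\<close> by simp
    moreover have "U p5 = 0" using c[of m b] e1 e2 e3 e4 e5 \<open>U p3 = 0\<close> \<open>U p4 = 0\<close> by simp
    ultimately have "U p1 = 0" using s1 by simp
    then show False using U(2) \<open>U p2 = 0\<close> \<open>U p3 = 0\<close> \<open>U p4 = 0\<close> \<open>U p5 = 0\<close> by auto
  qed
  have "aff_dim {p1,p2,p3,p4,p5} = 4"
    using aff_dim_affine_independent[OF indep] card5 by simp
  then have loF: "aff_dim F \<ge> 4" using aff_dim_subset[OF sub] by simp
  have "aff_dim F = aff_dim (P T) - 1" using lt upP loF by simp
  then show ?thesis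
    unfolding defines_facet_def facet_of_def
    using nonneg face Fne unfolding F_def d_def T_def by simp
qed

lemma ent_c0: "p \<in> {1,2,3} \<Longrightarrow> q \<in> {1,2,3} \<Longrightarrow> p \<noteq> q \<Longrightarrow>
  ent (vector [1, 1, -1, -1, 1, 1] :: real^6) p q = (if p = 2 then -1 else 1)"
  unfolding ent_def by auto

theorem proposition7:
  fixes k :: nat and \<sigma> :: "nat \<Rightarrow> nat"
  assumes "2 * k + 1 \<ge> 5"
    and "\<sigma> permutes {1, 2, 3}"
  shows "defines_facet (2 * k + 1) (sact \<sigma> (vector [1, 1, -1, -1, 1, 1]))"
proof -
  have k: "k \<ge> 1" using assms(1) by simp
  have img: "\<sigma> i \<in> {1,2,3}" if "i \<in> {1,2,3}" for i
    using permutes_in_image[OF assms(2)] that by blast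
  have inj: "\<sigma> i = \<sigma> j \<longleftrightarrow> i = j" for i j
    using permutes_inj[OF assms(2)] by (auto dest: injD)
  have "2 \<in> \<sigma> ` {1,2,3}" using permutes_image[OF assms(2)] by simp
  then obtain m where m: "m \<in> {1,2,3}" "\<sigma> m = 2" by auto
  define g :: "nat \<Rightarrow> real" where "g = (\<lambda>i. if i = m then -1 else 1)"
  have gi: "ent (vector [1, 1, -1, -1, 1, 1] :: real^6) (\<sigma> i) (\<sigma> j) = g i"
    if "i \<in> {1,2,3}" "j \<in> {1,2,3}" "i \<noteq> j" for i j
  proof -
    have "ent (vector [1, 1, -1, -1, 1, 1] :: real^6) (\<sigma> i) (\<sigma> j) = (if \<sigma> i = 2 then -1 else 1)"
      using ent_c0[OF img[OF that(1)] img[OF that(2)]] that(3) inj by simp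
    also have "(\<sigma> i = 2) = (i = m)" using m(2) inj by metis
    finally show ?thesis unfolding g_def by simp
  qed
  have eq: "sact \<sigma> (vector [1, 1, -1, -1, 1, 1]) = vector [g 1, g 1, g 2, g 2, g 3, g 3]"
    unfolding sact_def by (simp add: gi)
  have "defines_facet (2 * k + 1) (vector [g 1, g 1, g 2, g 2, g 3, g 3])"
  proof -
    consider "m = 1" | "m = 2" | "m = 3" using m by auto
    then show ?thesis
    proof cases
      case 1 show ?thesis by (rule main[of m 2 3]) (use 1 k g_def in auto)
    next
      case 2 show ?thesis by (rule main[of m 1 3]) (use 2 k g_def in auto)
    next
      case 3 show ?thesis by (rule main[of m 1 2]) (use 3 k g_def in auto)
    qed
  qed
  then show ?thesis unfolding eq .
qed
end
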